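(* Let $a,b\in GF(q)\setminus\{0\}$ with $a\neq b$. If $b/a$ is a square in $GF(q)$, then $\mathcal B_a$ and $\mathcal B_b$ have exactly $2(q+1)$ common tangent circles; all of them are of the first type, and every common tangent circle $\mathcal B^1_{(s,c)}$ satisfies $$\left(\frac{c-b-s\bar s}{c-a-s\bar s}\right)^2=\frac ba .$$ If $b/a$ is a non-square in $GF(q)$, then $\mathcal B_a$ and $\mathcal B_b$ have no common tangent circle.
   Context: Let $p$ be an odd prime, $m\ge1$, and $q=p^m$. $GF(q^2)$ denotes the quadratic extension of $GF(q)$, and for $z\in GF(q^2)$ we write $\bar z:=z^{q}$. The Miquelian Möbius plane $\mathbb M(q)$ has point set $GF(q^2)\cup\{\infty\}$ and circles of two types: for $s\in GF(q^2)$ and $c\in GF(q)\setminus\{0\}$, the circle of the first type $\mathcal B^1_{(s,c)}=\{z\in GF(q^2):(z-s)(\bar z-\bar s)=c\}$; for $s\in GF(q^2)\setminus\{0\}$ and $c\in GF(q)$, the circle of the second type $\mathcal B^2_{(s,c)}=\{z\in GF(q^2):\bar s z+s\bar z=c\}\cup\{\infty\}$. Two circles are called tangential if they have exactly one point in common. For $a\in GF(q)\setminus\{0\}$ put $\mathcal B_a:=\mathcal B^1_{(0,a)}$. A common tangent circle of two circles is a circle tangential to both. *)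

theory Defs
  imports Main "HOL-Computational_Algebra.Primes"
begin

text \<open>The field GF(q^2) is modelled by a finite field type 'a with q^2 elements;
  points of the Moebius plane are 'a option, with None playing the role of infinity.\<close>

definition cj :: "nat \<Rightarrow> 'a::field \<Rightarrow> 'a" where
  "cj q z = z ^ q"

definition GFq :: "nat \<Rightarrow> 'a::field set" where
  "GFq q = {x. x ^ q = x}"

definition circ1 :: "nat \<Rightarrow> 'a::field \<Rightarrow> 'a \<Rightarrow> 'a option set" where
  "circ1 q s c = Some ` {z. (z - s) * (cj q z - cj q s) = c}"

definition circ2 :: "nat \<Rightarrow> 'a::field \<Rightarrow> 'a \<Rightarrow> 'a option set" where
  "circ2 q s c = Some ` {z. cj q s * z + s * cj q z = c} \<union> {None}"

definition circles1 :: "nat \<Rightarrow> 'a::field option set set" where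
  "circles1 q = {circ1 q s c | s c. c \<in> GFq q \<and> c \<noteq> 0}"

definition circles2 :: "nat \<Rightarrow> 'a::field option set set" where
  "circles2 q = {circ2 q s c | s c. s \<noteq> 0 \<and> c \<in> GFq q}"

definition circles :: "nat \<Rightarrow> 'a::field option set set" where
  "circles q = circles1 q \<union> circles2 q"

definition tangential :: "'p set \<Rightarrow> 'p set \<Rightarrow> bool" where
  "tangential C D \<longleftrightarrow> card (C \<inter> D) = 1"

definition Bcirc :: "nat \<Rightarrow> 'a::field \<Rightarrow> 'a option set" where
  "Bcirc q a = circ1 q 0 a"

definition common_tangents :: "nat \<Rightarrow> 'a::field option set \<Rightarrow> 'a option set \<Rightarrow> 'a option set set" where
  "common_tangents q C D = {E \<in> circles q. tangential E C \<and> tangential E D}"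

end

theory Submission imports Defs "HOL-Number_Theory.Residues" "HOL-Computational_Algebra.Polynomial" begin

lemma fin_pow_card:
  fixes x :: "'a::{finite,field}"
  shows "x ^ card (UNIV :: 'a set) = x"
proof (cases "x = 0")
  case False
  have "x * (\<Prod>y\<in>UNIV-{0}. x * y) = x * x ^ (card (UNIV :: 'a set) - 1) * \<Prod>(UNIV-{0})"
    by (simp add: prod.distrib mult_ac)
  also have "x * x ^ (card (UNIV :: 'a set) - 1) = x ^ Suc (card (UNIV :: 'a set) - 1)"
    by (subst power_Suc) auto
  also have "Suc (card (UNIV :: 'a set) - 1) = card (UNIV :: 'a set)"
    using finite_UNIV_card_ge_0[where ?'a = 'a] by simp
  also have "(\<Prod>y\<in>UNIV-{0}. x * y) = (\<Prod>y\<in>UNIV-{0}. y)"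
    by (rule prod.reindex_bij_witness[of _ "\<lambda>y. y / x" "\<lambda>y. x * y"]) (use False in auto)
  finally show ?thesis
    by simp
qed (use finite_UNIV_card_ge_0[where ?'a = 'a] in auto)

locale gfc =
  fixes q :: nat and ty :: "'a::{finite,field} itself"
  assumes frob_add: "\<And>x y::'a. (x+y)^q = x^q + y^q"
   and frob_inv: "\<And>x::'a. x^(q*q) = x"
   and two_nz: "(2::'a) \<noteq> 0"
   and cardq: "card (UNIV::'a set) = q*q"
   and q2: "q \<ge> 2"
begin

lemma four_nz: "(4::'a) \<noteq> 0"
proof -
  have a: "(2::'a)*2 \<noteq> 0" using two_nz by (simp only: mult_eq_0_iff) simp
  have b: "(2::'a)*2 = 4" by simp
  from a b show ?thesis by metis
qed

lemma cj_add [simp]: "cj q (x + y) = cj q x + cj q (y::'a)"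
  unfolding cj_def by (rule frob_add)
lemma cj_mult [simp]: "cj q (x*y) = cj q x * cj q (y::'a)"
  by (simp add: cj_def power_mult_distrib)
lemma cj_cj [simp]: "cj q (cj q (x::'a)) = x"
  unfolding cj_def by (simp add: power_mult[symmetric] frob_inv)
lemma cj_0 [simp]: "cj q (0::'a) = 0" using q2 by (simp add: cj_def)
lemma cj_1 [simp]: "cj q (1::'a) = 1" by (simp add: cj_def)
lemma cj_minus [simp]: "cj q (x - y) = cj q x - cj q (y::'a)"
proof -
  have "cj q x = cj q ((x - y) + y)" by simp
  also have "\<dots> = cj q (x - y) + cj q y" by (rule cj_add)
  finally show ?thesis by simp
qed
lemma cj_2 [simp]: "cj q (2::'a) = 2"
proof -
  have "cj q (2::'a) = cj q (1 + 1)" by simp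
  also have "\<dots> = 2" by (simp only: cj_add cj_1) simp
  finally show ?thesis .
qed
lemma cj_4 [simp]: "cj q (4::'a) = 4"
proof -
  have "cj q (4::'a) = cj q (2 * 2)" by simp
  also have "\<dots> = 4" by (simp only: cj_mult cj_2) simp
  finally show ?thesis .
qed
lemma cj_power [simp]: "cj q ((x::'a)^n) = (cj q x)^n"
  by (simp add: cj_def power_mult[symmetric] mult.commute)
lemma cj_div [simp]: "cj q (x / y) = cj q x / cj q (y::'a)"
  by (simp add: cj_def power_divide)
lemma cj_eq0 [simp]: "cj q (x::'a) = 0 \<longleftrightarrow> x = 0"
  using q2 by (simp add: cj_def)
lemma cj_inj: "cj q (x::'a) = cj q y \<Longrightarrow> x = y"
  by (metis cj_cj)
lemma GFq_iff: "(x::'a) \<in> GFq q \<longleftrightarrow> cj q x = x"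
  by (simp add: GFq_def cj_def)
lemma cj_norm [simp]: "cj q (x * cj q x) = x * cj q (x::'a)"
  by (simp add: mult.commute)
lemma norm_eq0 [simp]: "x * cj q x = 0 \<longleftrightarrow> (x::'a) = 0"
  by simp

lemma tang_set:
  assumes s: "s \<noteq> (0::'a)" and e: "cj q e = e" and eq: "e^2 = 4*\<alpha>*(s*cj q s)"
  shows "{z. z*cj q z = \<alpha> \<and> z*cj q s + cj q z * s = e} = {e/(2*cj q s)}"
proof (intro equalityI subsetI)
  have cs: "cj q s \<noteq> 0" using s by simp
  fix z assume "z \<in> {z. z*cj q z = \<alpha> \<and> z*cj q s + cj q z * s = e}"
  hence h1: "z*cj q z = \<alpha>" and h2: "z*cj q s + cj q z*s = e" by auto
  define w where "w = z * cj q s"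
  have "(w - e/2)^2 = w^2 - e*w + e^2/4" using two_nz four_nz by (simp add: power2_eq_square field_simps)
  also have "e*w = w*w + (cj q z * s)*(z*cj q s)" unfolding w_def h2[symmetric] by (simp add: algebra_simps)
  also have "(cj q z * s)*(z*cj q s) = (z*cj q z)*(s*cj q s)" by (simp add: mult_ac)
  also have "e^2/4 = \<alpha>*(s*cj q s)" using eq four_nz by (simp add: field_simps)
  finally have "(w - e/2)^2 = 0" unfolding h1 by (simp add: power2_eq_square)
  hence "w = e/2" by simp
  thus "z \<in> {e/(2*cj q s)}" using cs two_nz by (simp add: w_def field_simps)
next
  have cs: "cj q s \<noteq> 0" using s by simp
  fix z assume "z \<in> {e/(2*cj q s)}"
  hence z: "z = e/(2*cj q s)" by simp
  have cz: "cj q z = e/(2*s)" by (simp add: z e)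
  have N0: "s * cj q s \<noteq> 0" using s by simp
  have "z * cj q z = (e/(2*cj q s)) * (e/(2*s))" by (simp only: cz) (simp only: z)
  also have "\<dots> = (e*e)/((2*cj q s)*(2*s))" by (rule times_divide_times_eq)
  also have "(2*cj q s)*(2*s) = 4*(s*cj q s)" by (simp add: algebra_simps)
  also have "e*e = 4*\<alpha>*(s*cj q s)" using eq by (simp add: power2_eq_square)
  also have "4*\<alpha>*(s*cj q s) / (4*(s*cj q s)) = \<alpha>" using N0 four_nz by simp
  finally have 1: "z * cj q z = \<alpha>" .
  have "z*cj q s = e/2" unfolding z using cs by simp
  moreover have "cj q z * s = e/2" unfolding cz using s by simp
  moreover have "e/2 + e/2 = e"
  proof -
    have "e/2 + e/2 = (e + e)/2" by (rule add_divide_distrib[symmetric])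
    also have "e + e = 2*e" by (rule mult_2[symmetric])
    also have "2*e/2 = e" using two_nz by simp
    finally show ?thesis .
  qed
  ultimately have 2: "z*cj q s + cj q z * s = e" by metis
  show "z \<in> {z. z*cj q z = \<alpha> \<and> z*cj q s + cj q z * s = e}" using 1 2 by simp
qed

lemma tang_card:
  assumes s: "s \<noteq> (0::'a)" and e: "cj q e = e"
  shows "card {z. z*cj q z = \<alpha> \<and> z*cj q s + cj q z * s = e} = 1 \<longleftrightarrow> e^2 = 4*\<alpha>*(s*cj q s)"
proof
  assume "e^2 = 4*\<alpha>*(s*cj q s)" then show "card {z. z*cj q z = \<alpha> \<and> z*cj q s + cj q z * s = e} = 1"
    using tang_set[OF s e] by simp
next
  have cs: "cj q s \<noteq> 0" using s by simp
  assume "card {z. z*cj q z = \<alpha> \<and> z*cj q s + cj q z * s = e} = 1"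
  then obtain z where K: "{z. z*cj q z = \<alpha> \<and> z*cj q s + cj q z * s = e} = {z}"
    by (auto simp: card_1_singleton_iff)
  then have z1: "z*cj q z = \<alpha>" and z2: "z*cj q s + cj q z * s = e" by auto
  define z' where "z' = s * cj q z / cj q s"
  have cz': "cj q z' = cj q s * z / s" by (simp add: z'_def)
  have "z' * cj q z' = \<alpha>" using s cs by (simp add: cz' z'_def field_simps flip: z1)
  moreover have "z'*cj q s + cj q z' * s = e" using s cs by (simp add: cz' z'_def field_simps flip: z2)
  ultimately have "z' \<in> {z. z*cj q z = \<alpha> \<and> z*cj q s + cj q z * s = e}" by simp
  hence "z' = z" using K by simp
  hence w: "cj q z * s = z * cj q s" using cs by (simp add: z'_def field_simps)
  have ee: "e = 2 * (z * cj q s)" using z2 w by simp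
  have aa: "\<alpha>*(s*cj q s) = (z * cj q s)^2" using w by (simp add: power2_eq_square algebra_simps flip: z1)
  have "e^2 = 4 * (z * cj q s)^2" unfolding ee by (simp add: power_mult_distrib)
  then show "e^2 = 4*\<alpha>*(s*cj q s)" using aa by (simp add: mult.assoc)
qed

lemma Some_Int: "Some ` A \<inter> Some ` B = Some ` (A \<inter> B)" by auto

lemma circ1_int: "circ1 q s c \<inter> Bcirc q a =
   Some ` {z::'a. z*cj q z = a \<and> z*cj q s + cj q z * s = a + s*cj q s - c}"
proof -
  have "circ1 q s c \<inter> Bcirc q a = Some ` ({z. (z - s) * (cj q z - cj q s) = c} \<inter> {z. (z - 0) * (cj q z - cj q 0) = a})"
    unfolding circ1_def Bcirc_def by (rule Some_Int)
  also have "{z. (z - s) * (cj q z - cj q s) = c} \<inter> {z. (z - 0) * (cj q z - cj q 0) = a}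
     = {z::'a. z*cj q z = a \<and> z*cj q s + cj q z * s = a + s*cj q s - c}"
  proof -
    have "\<And>z::'a. (z - s) * (cj q z - cj q s) = z*cj q z - (z*cj q s + cj q z * s) + s*cj q s"
      by (simp add: algebra_simps)
    then show ?thesis by (auto simp: algebra_simps)
  qed
  finally show ?thesis .
qed

lemma circ2_int: "circ2 q s c \<inter> Bcirc q a =
   Some ` {z::'a. z*cj q z = a \<and> z*cj q s + cj q z * s = c}"
proof -
  have "circ2 q s c \<inter> Bcirc q a = Some ` {z. cj q s * z + s * cj q z = c} \<inter> Some ` {z. (z - 0) * (cj q z - cj q 0) = a}"
    unfolding circ2_def Bcirc_def circ1_def by auto
  also have "\<dots> = Some ` ({z. cj q s * z + s * cj q z = c} \<inter> {z. (z - 0) * (cj q z - cj q 0) = a})"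
    by (rule Some_Int)
  also have "{z. cj q s * z + s * cj q z = c} \<inter> {z. (z - 0) * (cj q z - cj q 0) = a}
     = {z::'a. z*cj q z = a \<and> z*cj q s + cj q z * s = c}"
    by (auto simp: mult.commute)
  finally show ?thesis .
qed

lemma card_Some: "card (Some ` A) = card A"
  by (rule card_image) simp

lemma tang1:
  assumes "s \<noteq> (0::'a)" "cj q a = a" "cj q c = c"
  shows "tangential (circ1 q s c) (Bcirc q a) \<longleftrightarrow> (a + s*cj q s - c)^2 = 4*a*(s*cj q s)"
  unfolding tangential_def circ1_int card_Some
  by (rule tang_card) (use assms in simp_all)

lemma tang2:
  assumes "s \<noteq> (0::'a)" "cj q c = c"
  shows "tangential (circ2 q s c) (Bcirc q a) \<longleftrightarrow> c^2 = 4*a*(s*cj q s)"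
  unfolding tangential_def circ2_int card_Some
  by (rule tang_card) (use assms in simp_all)

lemma tang0:
  assumes "tangential (circ1 q 0 c) (Bcirc q (a::'a))"
  shows "c = a"
proof (rule ccontr)
  assume "c \<noteq> a"
  then have "circ1 q 0 c \<inter> Bcirc q a = Some ` {}" unfolding circ1_int
    by (intro arg_cong[where f="image Some"]) auto
  then show False using assms by (simp add: tangential_def)
qed

lemma int1_set:
  assumes "s \<noteq> (0::'a)" "cj q a = a" "cj q c = c" "(a + s*cj q s - c)^2 = 4*a*(s*cj q s)"
  shows "circ1 q s c \<inter> Bcirc q a = {Some ((a + s*cj q s - c)/(2*cj q s))}"
  unfolding circ1_int by (subst tang_set) (use assms in simp_all)

lemma fiber:
  assumes kq: "cj q k = k" and k0: "k \<noteq> 0"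
  shows "card {z::'a. z*cj q z = k} = q + 1"
proof -
  define G where "G = {x::'a. cj q x = x \<and> x \<noteq> 0}"
  define F where "F k = {z::'a. z*cj q z = k}" for k
  have zpow: "z * cj q z = z^(q+1)" for z :: 'a by (simp add: cj_def)
  have Fb: "card (F k) \<le> q+1" for k
  proof -
    define P where "P = monom (1::'a) (q+1) - [:k:]"
    have "coeff P (q+1) = 1" by (simp add: P_def)
    hence P0: "P \<noteq> 0" by auto
    have dP: "degree P \<le> q+1" unfolding P_def by (intro degree_diff_le degree_monom_le) simp
    have "F k = {x. poly P x = 0}" by (auto simp: F_def P_def poly_monom zpow)
    then show ?thesis using card_poly_roots_bound[OF P0] dP by simp
  qed
  have Gb: "card G \<le> q - 1"
  proof -
    define P where "P = monom (1::'a) q - [:0,1:]"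
    have "coeff P q = 1" using q2 by (simp add: P_def coeff_pCons split: nat.split)
    hence P0: "P \<noteq> 0" by auto
    have dP: "degree P \<le> q" unfolding P_def using q2 by (intro degree_diff_le degree_monom_le) simp
    have R: "{x. cj q x = x} = {x. poly P x = 0}" by (auto simp: P_def poly_monom cj_def)
    have fR: "finite {x::'a. cj q x = x}" by simp
    have "G = {x. cj q x = x} - {0}" by (auto simp: G_def)
    hence "card G = card {x::'a. cj q x = x} - 1" by (simp add: card_Diff_singleton)
    also have "card {x::'a. cj q x = x} \<le> q" unfolding R using card_poly_roots_bound[OF P0] dP by simp
    finally show ?thesis by simp
  qed
  have U: "UNIV - {0} = (\<Union>k\<in>G. F k)"
    by (auto simp: G_def F_def)
  have "card (UNIV - {0::'a}) = q*q - 1" using cardq by (simp add: card_Diff_singleton)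
  also have "card (UNIV - {0::'a}) = (\<Sum>k\<in>G. card (F k))"
    unfolding U by (rule card_UN_disjoint) (auto simp: F_def)
  finally have S: "(\<Sum>k\<in>G. card (F k)) = q*q - 1" .
  have kG: "k \<in> G" using kq k0 by (simp add: G_def)
  show ?thesis
  proof (rule ccontr)
    assume "card {z::'a. z*cj q z = k} \<noteq> q + 1"
    hence "card (F k) < q+1" using Fb[of k] by (simp add: F_def)
    have "(\<Sum>k\<in>G. card (F k)) < (\<Sum>k\<in>G. q+1)"
      by (rule sum_strict_mono_ex1) (use Fb kG \<open>card (F k) < q+1\<close> in auto)
    also have "\<dots> = card G * (q+1)" by simp
    also have "\<dots> \<le> (q-1)*(q+1)" using Gb by (rule mult_right_mono) simp
    also have "\<dots> = q*q - 1"
    proof -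
      obtain n where "q = Suc n" using q2 by (cases q) auto
      then show ?thesis by simp
    qed
    finally show False using S by simp
  qed
qed

lemma tang_both:
  assumes "a \<in> GFq q" "b \<in> GFq q" "a \<noteq> 0" "b \<noteq> 0" "a \<noteq> (b::'a)"
    and "c \<in> GFq q" "c \<noteq> 0"
    and "circ1 q s c \<in> common_tangents q (Bcirc q a) (Bcirc q b)"
  shows "s \<noteq> 0 \<and> (a + s*cj q s - c)^2 = 4*a*(s*cj q s) \<and> (b + s*cj q s - c)^2 = 4*b*(s*cj q s)"
proof -
  have ta: "tangential (circ1 q s c) (Bcirc q a)" and tb: "tangential (circ1 q s c) (Bcirc q b)"
    using assms(8) by (auto simp: common_tangents_def)
  have s0: "s \<noteq> 0"
  proof
    assume "s = 0"
    then have "c = a" "c = b" using tang0 ta tb by auto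
    then show False using assms(5) by simp
  qed
  then show ?thesis using ta tb tang1 assms by (simp add: GFq_iff)
qed

lemma no_circ2:
  assumes "a \<in> GFq q" "b \<in> GFq q" "a \<noteq> 0" "b \<noteq> 0" "a \<noteq> (b::'a)"
    and "E \<in> common_tangents q (Bcirc q a) (Bcirc q b)"
  shows "E \<in> circles1 q"
proof -
  have E: "E \<in> circles q" "tangential E (Bcirc q a)" "tangential E (Bcirc q b)"
    using assms(6) by (auto simp: common_tangents_def)
  show ?thesis
  proof (rule ccontr)
    assume "E \<notin> circles1 q"
    then have "E \<in> circles2 q" using E(1) by (simp add: circles_def)
    then obtain s c where Ed: "E = circ2 q s c" "s \<noteq> 0" "c \<in> GFq q" by (auto simp: circles2_def)
    have cg: "cj q c = c" using Ed(3) by (simp add: GFq_iff)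
    have t1: "c^2 = 4*a*(s*cj q s)" using tang2[OF Ed(2) cg, of a] E(2) Ed(1) by simp
    have t2: "c^2 = 4*b*(s*cj q s)" using tang2[OF Ed(2) cg, of b] E(3) Ed(1) by simp
    from t1 t2 have "4*a*(s*cj q s) = 4*b*(s*cj q s)" by metis
    then have "a = b" using four_nz Ed(2) by simp
    then show False using assms(5) by simp
  qed
qed

lemma circ_form:
  assumes "a \<in> GFq q" "b \<in> GFq q" "a \<noteq> 0" "b \<noteq> 0" "a \<noteq> (b::'a)"
    and "E \<in> common_tangents q (Bcirc q a) (Bcirc q b)"
  obtains s c where "E = circ1 q s c" "c \<in> GFq q" "c \<noteq> 0" "s \<noteq> 0"
     "(a + s*cj q s - c)^2 = 4*a*(s*cj q s)" "(b + s*cj q s - c)^2 = 4*b*(s*cj q s)"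
proof -
  have "E \<in> circles1 q" using no_circ2 assms by blast
  then obtain s c where Ed: "E = circ1 q s c" "c \<in> GFq q" "c \<noteq> 0" by (auto simp: circles1_def)
  then show ?thesis using tang_both[OF assms(1-5) Ed(2,3)] assms(6) that by auto
qed

lemma ratio:
  assumes "a \<noteq> 0" "b \<noteq> 0" "n \<noteq> (0::'a)"
    "(a + n - c)^2 = 4*a*n" "(b + n - c)^2 = 4*b*n"
  shows "((c - b - n) / (c - a - n))^2 = b / a" "c - a - n \<noteq> 0"
proof -
  have ne: "a + n - c \<noteq> 0" using assms four_nz by (metis mult_eq_0_iff power_zero_numeral) 
  show "c - a - n \<noteq> 0" using ne by (simp add: algebra_simps)
  have "((c - b - n) / (c - a - n))^2 = (b + n - c)^2 / (a + n - c)^2"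
    by (simp add: power_divide power2_eq_square algebra_simps)
  also have "\<dots> = (4*b*n)/(4*a*n)" using assms by simp
  also have "\<dots> = b/a" using assms four_nz by simp
  finally show "((c - b - n) / (c - a - n))^2 = b / a" .
qed

lemma main_loc:
  assumes ag: "a \<in> GFq q" and bg: "b \<in> GFq q" and a0: "a \<noteq> 0" and b0: "b \<noteq> 0" and ab: "a \<noteq> (b::'a)"
  shows "((\<exists>x \<in> GFq q. x ^ 2 = b / a) \<longrightarrow>
            card (common_tangents q (Bcirc q a) (Bcirc q b)) = 2 * (q + 1)
          \<and> common_tangents q (Bcirc q a) (Bcirc q b) \<subseteq> circles1 q
          \<and> (\<forall>s c. c \<in> GFq q \<and> c \<noteq> 0 \<and>
                 circ1 q s c \<in> common_tangents q (Bcirc q a) (Bcirc q b) \<longrightarrow>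
                 ((c - b - s * cj q s) / (c - a - s * cj q s)) ^ 2 = b / a))
       \<and> (\<not> (\<exists>x \<in> GFq q. x ^ 2 = b / a) \<longrightarrow>
            common_tangents q (Bcirc q a) (Bcirc q b) = {})"
proof -
  let ?CT = "common_tangents q (Bcirc q a) (Bcirc q b)"
  have sub: "?CT \<subseteq> circles1 q" using no_circ2[OF ag bg a0 b0 ab] by blast
  have form: "\<forall>s c. c \<in> GFq q \<and> c \<noteq> 0 \<and> circ1 q s c \<in> ?CT \<longrightarrow>
                 ((c - b - s * cj q s) / (c - a - s * cj q s)) ^ 2 = b / a"
  proof (intro allI impI)
    fix s c assume h: "c \<in> GFq q \<and> c \<noteq> 0 \<and> circ1 q s c \<in> ?CT"
    then have "s \<noteq> 0 \<and> (a + s*cj q s - c)^2 = 4*a*(s*cj q s) \<and> (b + s*cj q s - c)^2 = 4*b*(s*cj q s)"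
      using tang_both[OF ag bg a0 b0 ab] by blast
    then show "((c - b - s * cj q s) / (c - a - s * cj q s)) ^ 2 = b / a"
      using ratio[OF a0 b0] by simp
  qed
  have nsq: "?CT = {}" if ns: "\<not> (\<exists>x \<in> GFq q. x ^ 2 = b / a)"
  proof (rule ccontr)
    assume "?CT \<noteq> {}"
    then obtain E where E: "E \<in> ?CT" by auto
    obtain s c where sc0: "E = circ1 q s c" "c \<in> GFq q" "c \<noteq> 0" "s \<noteq> 0"
      "(a + s*cj q s - c)^2 = 4*a*(s*cj q s)" "(b + s*cj q s - c)^2 = 4*b*(s*cj q s)"
      by (rule circ_form[OF ag bg a0 b0 ab E])
    then have sc: "c \<in> GFq q" "s \<noteq> 0"
      "(a + s*cj q s - c)^2 = 4*a*(s*cj q s)" "(b + s*cj q s - c)^2 = 4*b*(s*cj q s)" by simp_all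
    define x where "x = (c - b - s * cj q s) / (c - a - s * cj q s)"
    have "x^2 = b/a" unfolding x_def using ratio[OF a0 b0 _ sc(3,4)] sc(2) by simp
    moreover have "x \<in> GFq q" using ag bg sc(1) by (simp add: GFq_iff x_def mult.commute)
    ultimately show False using ns by blast
  qed
  have sq: "card ?CT = 2 * (q + 1)" if sqh: "\<exists>x \<in> GFq q. x ^ 2 = b / a"
  proof -
    obtain r where rg: "r \<in> GFq q" and rr: "r^2 = b/a" using sqh by blast
    have bd: "b = a * r^2" using rr a0 by (simp add: field_simps)
    define k1 where "k1 = a*(1+r)^2/4"
    define k2 where "k2 = a*(1-r)^2/4"
    define g where "g n = (a+b)/2 - n" for n
    have K1: "4*k1 = a*(1+r)^2" using four_nz by (simp add: k1_def)
    have K2: "4*k2 = a*(1-r)^2" using four_nz by (simp add: k2_def)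
    have G: "2*g n = a + b - 2*n" for n using two_nz by (simp add: g_def right_diff_distrib)
    have c4: "x = y" if "4*x = 4*(y::'a)" for x y using that four_nz by simp
    have c2: "x = y" if "2*x = 2*(y::'a)" for x y using that two_nz by simp
    have r0: "r \<noteq> 0" using bd b0 by auto
    have r1: "1 + r \<noteq> 0"
    proof
      assume "1 + r = 0" then have "r = -1" by (simp add: add_eq_0_iff)
      then show False using bd ab by simp
    qed
    have r2: "1 - r \<noteq> 0" using bd ab by auto
    have k10: "k1 \<noteq> 0" using a0 r1 four_nz by (simp add: k1_def)
    have k20: "k2 \<noteq> 0" using a0 r2 four_nz by (simp add: k2_def)
    have k12: "k1 \<noteq> k2"
    proof
      assume "k1 = k2"
      then have "4*k1 - 4*k2 = 0" by simp
      moreover have "4*k1 - 4*k2 = 4*(a*r)" unfolding K1 K2 by (simp add: power2_eq_square algebra_simps)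
      ultimately show False using a0 r0 four_nz by simp
    qed
    have k1g: "cj q k1 = k1" and k2g: "cj q k2 = k2" using ag rg by (simp_all add: k1_def k2_def GFq_iff)
    have gg: "cj q (g n) = g n" if "cj q n = n" for n using ag bg that by (simp add: g_def GFq_iff)
    have g4: "4*g k = 2*(a+b) - 4*k" for k
    proof -
      have "4*g k = 2*(2*g k)" by simp
      also have "\<dots> = 2*(a+b) - 4*k" unfolding G by (simp add: power2_eq_square algebra_simps)
      finally show ?thesis .
    qed
    have g10: "g k1 \<noteq> 0"
    proof
      assume "g k1 = 0"
      then have "4*g k1 = 0" by simp
      moreover have "4*g k1 = a*(1-r)^2" unfolding g4 K1 bd by (simp add: power2_eq_square algebra_simps)
      ultimately show False using a0 r2 by simp
    qed
    have g20: "g k2 \<noteq> 0"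
    proof
      assume "g k2 = 0"
      then have "4*g k2 = 0" by simp
      moreover have "4*g k2 = a*(1+r)^2" unfolding g4 K2 bd by (simp add: power2_eq_square algebra_simps)
      ultimately show False using a0 r1 by simp
    qed
    have n16: "(16::'a) \<noteq> 0" using four_nz by (metis mult_eq_0_iff num_double numeral_times_numeral)
    have idg: "16*((n - k1)*(n - k2)) = 4*((a + n - c)^2 - 4*a*n)" if cg: "c = g n" for n c
    proof -
      have C: "2*c = a + b - 2*n" using G cg by simp
      have "16*((n - k1)*(n - k2)) = (4*n - 4*k1)*(4*n - 4*k2)" by (simp add: power2_eq_square algebra_simps)
      also have "\<dots> = (4*n - a*(1+r)^2)*(4*n - a*(1-r)^2)" unfolding K1 K2 ..
      also have "\<dots> = (a - a*r^2 + 4*n)^2 - 16*a*n" by (simp add: power2_eq_square algebra_simps)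
      also have "\<dots> = (2*a + 2*n - (a + b - 2*n))^2 - 16*a*n" unfolding bd by (simp add: power2_eq_square algebra_simps)
      also have "\<dots> = (2*a + 2*n - 2*c)^2 - 16*a*n" unfolding C ..
      also have "\<dots> = 4*((a + n - c)^2 - 4*a*n)" by (simp add: power2_eq_square algebra_simps)
      finally show ?thesis .
    qed
    have char: "((a + n - c)^2 = 4*a*n \<and> (b + n - c)^2 = 4*b*n) \<longleftrightarrow> ((n = k1 \<or> n = k2) \<and> c = g n)" for n c
    proof
      assume h: "(a + n - c)^2 = 4*a*n \<and> (b + n - c)^2 = 4*b*n"
      have "(a - b) * ((a + n - c) + (b + n - c) - 4*n) = (a + n - c)^2 - (b + n - c)^2 - (4*a*n - 4*b*n)"
        by (simp add: power2_eq_square algebra_simps)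
      also have "\<dots> = 0" using h by simp
      finally have "(a + n - c) + (b + n - c) - 4*n = 0" using ab by simp
      then have "2*c = 2*g n" unfolding G by (simp add: power2_eq_square algebra_simps)
      then have cg: "c = g n" by (rule c2)
      have "16*((n - k1)*(n - k2)) = 0" using h idg[OF cg] by simp
      then show "(n = k1 \<or> n = k2) \<and> c = g n" using cg n16 by simp
    next
      assume h: "(n = k1 \<or> n = k2) \<and> c = g n"
      then have cg: "c = g n" by simp
      have C: "2*c = a + b - 2*n" using G cg by simp
      have "(n - k1)*(n - k2) = 0" using h by auto
      then have "4*((a + n - c)^2 - 4*a*n) = 0" using idg[OF cg] by (metis mult_zero_right)
      then have A: "(a + n - c)^2 - 4*a*n = 0" using four_nz by (metis mult_eq_0_iff)
      have "4*((b + n - c)^2 - 4*b*n) = (2*b + 2*n - 2*c)^2 - 16*b*n" by (simp add: power2_eq_square algebra_simps)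
      also have "\<dots> = (2*b + 2*n - (a + b - 2*n))^2 - 16*b*n" unfolding C ..
      also have "\<dots> = (2*a + 2*n - (a + b - 2*n))^2 - 16*a*n" by (simp add: power2_eq_square algebra_simps)
      also have "\<dots> = (2*a + 2*n - 2*c)^2 - 16*a*n" unfolding C ..
      also have "\<dots> = 4*((a + n - c)^2 - 4*a*n)" by (simp add: power2_eq_square algebra_simps)
      finally have id2: "(b + n - c)^2 - 4*b*n = (a + n - c)^2 - 4*a*n" by (rule c4)
      show "(a + n - c)^2 = 4*a*n \<and> (b + n - c)^2 = 4*b*n" using A id2 by simp
    qed
    define S where "S = {s::'a. s*cj q s = k1} \<union> {s. s*cj q s = k2}"
    define f where "f s = circ1 q s (g (s*cj q s))" for s
    have CT: "?CT = f ` S"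
    proof (intro equalityI subsetI)
      fix E assume E: "E \<in> ?CT"
      obtain s c where sc: "E = circ1 q s c" "c \<in> GFq q" "c \<noteq> 0" "s \<noteq> 0"
         "(a + s*cj q s - c)^2 = 4*a*(s*cj q s)" "(b + s*cj q s - c)^2 = 4*b*(s*cj q s)"
        by (rule circ_form[OF ag bg a0 b0 ab E])
      then have "(s*cj q s = k1 \<or> s*cj q s = k2) \<and> c = g (s*cj q s)" using char by blast
      then show "E \<in> f ` S" using sc(1) by (auto simp: f_def S_def)
    next
      fix E assume "E \<in> f ` S"
      then obtain s where s: "s \<in> S" "E = f s" by auto
      define n where "n = s*cj q s"
      have nk: "n = k1 \<or> n = k2" using s(1) by (auto simp: S_def n_def)
      have s0: "s \<noteq> 0" using nk k10 k20 n_def by auto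
      have ng: "cj q n = n" by (simp add: n_def)
      have gn0: "g n \<noteq> 0" using nk g10 g20 by auto
      have ggn: "cj q (g n) = g n" by (rule gg[OF ng])
      have E1: "E \<in> circles q" using gn0 ggn s(2) by (auto simp: f_def circles_def circles1_def GFq_iff n_def)
      have eqs: "(a + n - g n)^2 = 4*a*n \<and> (b + n - g n)^2 = 4*b*n" using char nk by blast
      have "tangential E (Bcirc q a)" "tangential E (Bcirc q b)"
        using tang1[OF s0 _ ggn[unfolded n_def]] eqs ag bg s(2) by (simp_all add: f_def n_def GFq_iff)
      then show "E \<in> ?CT" using E1 by (simp add: common_tangents_def)
    qed
    have inj: "inj_on f S"
    proof
      fix s s' assume s: "s \<in> S" and s': "s' \<in> S" and fe: "f s = f s'"
      have props: "t \<noteq> 0 \<and> cj q (g (t*cj q t)) = g (t*cj q t) \<and>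
          (a + t*cj q t - g (t*cj q t))^2 = 4*a*(t*cj q t) \<and> (b + t*cj q t - g (t*cj q t))^2 = 4*b*(t*cj q t)"
        if "t \<in> S" for t
      proof -
        have nk: "t*cj q t = k1 \<or> t*cj q t = k2" using that by (auto simp: S_def)
        then show ?thesis using k10 k20 gg[of "t*cj q t"] char[of "t*cj q t" "g (t*cj q t)"] by auto
      qed
      have pt: "(a' + t*cj q t - g (t*cj q t))/(2*cj q t) = (a' + t'*cj q t' - g (t'*cj q t'))/(2*cj q t')"
        if t: "t \<in> S" and t': "t' \<in> S" and ft: "f t = f t'" and a': "a' = a \<or> a' = b" for t t' a'
      proof -
        have ca: "cj q a' = a'" using a' ag bg by (auto simp: GFq_iff)
        have eq: "(a' + u*cj q u - g (u*cj q u))^2 = 4*a'*(u*cj q u)" if "u \<in> S" for u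
          using props[OF that] a' by auto
        have "f t \<inter> Bcirc q a' = {Some ((a' + t*cj q t - g (t*cj q t))/(2*cj q t))}"
          unfolding f_def by (rule int1_set) (use props[OF t] ca eq[OF t] in auto)
        moreover have "f t' \<inter> Bcirc q a' = {Some ((a' + t'*cj q t' - g (t'*cj q t'))/(2*cj q t'))}"
          unfolding f_def by (rule int1_set) (use props[OF t'] ca eq[OF t'] in auto)
        ultimately show ?thesis using ft by simp
      qed
      have A: "(a + s*cj q s - g (s*cj q s))/(2*cj q s) = (a + s'*cj q s' - g (s'*cj q s'))/(2*cj q s')"
        using pt[OF s s' fe] by simp
      have B: "(b + s*cj q s - g (s*cj q s))/(2*cj q s) = (b + s'*cj q s' - g (s'*cj q s'))/(2*cj q s')"
        using pt[OF s s' fe] by simp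
      have dif: "(a + u*cj q u - g (u*cj q u))/(2*cj q u) - (b + u*cj q u - g (u*cj q u))/(2*cj q u) = (a - b)/(2*cj q u)" for u
        by (simp add: diff_divide_distrib[symmetric])
      have "(a - b)/(2*cj q s) = (a - b)/(2*cj q s')" using dif[of s] dif[of s'] A B by metis
      then have "2*cj q s = 2*cj q s'" using ab by (simp add: divide_cancel_left)
      then have "cj q s = cj q s'" using two_nz by simp
      then show "s = s'" by (rule cj_inj)
    qed
    have "card ?CT = card S" unfolding CT using inj by (rule card_image)
    also have "card S = card {s::'a. s*cj q s = k1} + card {s::'a. s*cj q s = k2}"
      unfolding S_def by (rule card_Un_disjoint) (use k12 in auto)
    also have "\<dots> = 2*(q+1)" using fiber k1g k2g k10 k20 by simp
    finally show ?thesis .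
  qed
  show ?thesis using sub form nsq sq by blast
qed

end

theorem mainTheorem2:
  fixes a b :: "'a::{finite,field}" and p m q :: nat
  assumes "prime p" and "odd p" and "m \<ge> 1" and "q = p ^ m"
    and "card (UNIV :: 'a set) = q ^ 2"
    and "a \<in> GFq q" and "b \<in> GFq q" and "a \<noteq> 0" and "b \<noteq> 0" and "a \<noteq> b"
  shows "((\<exists>x \<in> GFq q. x ^ 2 = b / a) \<longrightarrow>
            card (common_tangents q (Bcirc q a) (Bcirc q b)) = 2 * (q + 1)
          \<and> common_tangents q (Bcirc q a) (Bcirc q b) \<subseteq> circles1 q
          \<and> (\<forall>s c. c \<in> GFq q \<and> c \<noteq> 0 \<and>
                 circ1 q s c \<in> common_tangents q (Bcirc q a) (Bcirc q b) \<longrightarrow>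
                 ((c - b - s * cj q s) / (c - a - s * cj q s)) ^ 2 = b / a))
       \<and> (\<not> (\<exists>x \<in> GFq q. x ^ 2 = b / a) \<longrightarrow>
            common_tangents q (Bcirc q a) (Bcirc q b) = {})"
proof -
  have fin: "finite (UNIV::'a set)" by simp
  have cpos: "CHAR('a) > 0" by (rule finite_imp_CHAR_pos[OF fin])
  have cprime: "prime CHAR('a)" by (rule prime_CHAR_semidom[OF cpos])
  have "CHAR('a) dvd card (UNIV::'a set)" by (rule CHAR_dvd_CARD)
  hence "CHAR('a) dvd p^(m*2)" using assms(4,5) by (simp add: power_mult)
  hence "CHAR('a) dvd p" using cprime prime_dvd_power by blast
  hence cp: "CHAR('a) = p" using assms(1) cprime by (simp add: primes_dvd_imp_eq)
  have addq: "(x+y)^q = x^q + y^q" for x y :: 'a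
    by (rule freshmans_dream'[where n=m, OF cprime]) (simp add: assms(4) cp)
  have cq: "card (UNIV::'a set) = q*q" using assms(5) by (simp add: power2_eq_square)
  have invq: "x^(q*q) = x" for x :: 'a using fin_pow_card[of x] cq by simp
  have two: "(2::'a) \<noteq> 0"
  proof
    assume "(2::'a) = 0"
    then have "of_nat 2 = (0::'a)" by simp
    then have "p dvd 2" using cp of_nat_eq_0_iff_char_dvd by metis
    then have "p \<le> 2" by (simp add: dvd_imp_le)
    moreover have "p \<ge> 2" using assms(1) by (rule prime_ge_2_nat)
    ultimately have "p = 2" by simp
    then show False using assms(2) by simp
  qed
  have q2: "q \<ge> 2"
  proof -
    have "p \<ge> 2" using assms(1) by (rule prime_ge_2_nat)
    moreover have "p \<le> p^m" using assms(3) \<open>p \<ge> 2\<close> by (simp add: self_le_power)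
    ultimately show ?thesis using assms(4) by simp
  qed
  interpret gfc q "TYPE('a)"
    by standard (use addq invq two cq q2 in auto)
  show ?thesis by (rule main_loc) (use assms in auto)
qed

end
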